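(* For a weakly symmetric discrete memoryless channel $W$ with input alphabet $\mathbb{F}_q$, $$C_{KV}(W)\ge1-(q-1)Z(W),$$ where $Z(W)$ is the Bhattacharyya parameter of $W$.
   Context: A discrete memoryless channel with transition probabilities $W(y|x)$, $x\in\mathbb{F}_q$, $y\in\mathcal{Y}$, is weakly symmetric if $\mathcal{Y}$ admits a partition $Y_1\cup\dots\cup Y_r$ such that each submatrix $(W(y|x))_{x,y\in Y_i}$ has all rows permutations of each other and all columns permutations of each other. With input $X$ uniform on $\mathbb{F}_q$ and output $Y$, the APP vector of output $y$ is $\pi_y=(\mathrm{prob}(X=\alpha|Y=y))_\alpha$ and the Koetter–Vardy capacity is $C_{KV}(W)=\mathbb{E}(\sum_\alpha\pi_Y(\alpha)^2)$. The Bhattacharyya parameter is $Z(W)=\frac1{q(q-1)}\sum_{x\ne x'}\sum_{y\in\mathcal{Y}}\sqrt{W(y|x)W(y|x')}$. *)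

theory Defs
  imports Complex_Main "HOL-Library.Disjoint_Sets" "HOL-Combinatorics.Permutations"
begin

text \<open>A discrete memoryless channel with input alphabet the finite field 'a and
finite output alphabet 'b; W x y stands for the transition probability W(y|x).\<close>

definition dmc :: "('a::finite \<Rightarrow> 'b::finite \<Rightarrow> real) \<Rightarrow> bool" where
  "dmc W \<longleftrightarrow> (\<forall>x y. 0 \<le> W x y) \<and> (\<forall>x. (\<Sum>y\<in>UNIV. W x y) = 1)"

definition weakly_symmetric :: "('a::finite \<Rightarrow> 'b::finite \<Rightarrow> real) \<Rightarrow> bool" where
  "weakly_symmetric W \<longleftrightarrow> (\<exists>P. partition_on (UNIV :: 'b set) P \<and>
     (\<forall>B\<in>P.
        (\<forall>x x'. \<exists>\<sigma>. \<sigma> permutes B \<and> (\<forall>y\<in>B. W x' (\<sigma> y) = W x y)) \<and>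
        (\<forall>y\<in>B. \<forall>y'\<in>B. \<exists>\<tau>. \<tau> permutes (UNIV :: 'a set) \<and> (\<forall>x. W (\<tau> x) y' = W x y))))"

text \<open>Output distribution for uniform input X.\<close>
definition out_prob :: "('a::finite \<Rightarrow> 'b \<Rightarrow> real) \<Rightarrow> 'b \<Rightarrow> real" where
  "out_prob W y = (\<Sum>x\<in>UNIV. W x y) / real (card (UNIV :: 'a set))"

text \<open>APP vector: prob(X = alpha | Y = y) for uniform input.\<close>
definition app :: "('a::finite \<Rightarrow> 'b \<Rightarrow> real) \<Rightarrow> 'b \<Rightarrow> 'a \<Rightarrow> real" where
  "app W y \<alpha> = W \<alpha> y / (\<Sum>x\<in>UNIV. W x y)"

text \<open>Koetter--Vardy capacity E(sum_alpha pi_Y(alpha)^2); outputs of probability zero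
contribute nothing.\<close>
definition C_KV :: "('a::finite \<Rightarrow> 'b::finite \<Rightarrow> real) \<Rightarrow> real" where
  "C_KV W = (\<Sum>y\<in>UNIV. out_prob W y * (\<Sum>\<alpha>\<in>UNIV. (app W y \<alpha>)^2))"

definition bhattacharyya :: "('a::finite \<Rightarrow> 'b::finite \<Rightarrow> real) \<Rightarrow> real" where
  "bhattacharyya W = (1 / (real (card (UNIV :: 'a set)) * (real (card (UNIV :: 'a set)) - 1))) *
     (\<Sum>x\<in>UNIV. \<Sum>x'\<in>UNIV - {x}. \<Sum>y\<in>UNIV. sqrt (W x y * W x' y))"

end

theory Submission
  imports Defs
begin

lemma key_y:
  fixes w :: "'a::finite \<Rightarrow> real"
  assumes nn: "\<And>x. 0 \<le> w x"
  shows "(\<Sum>x\<in>UNIV. w x) - (\<Sum>a\<in>UNIV. (w a)^2 / (\<Sum>x\<in>UNIV. w x))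
         \<le> (\<Sum>x\<in>UNIV. \<Sum>x'\<in>UNIV - {x}. sqrt (w x * w x'))"
proof -
  define S where "S = (\<Sum>x\<in>UNIV. w x)"
  have S0: "0 \<le> S" unfolding S_def by (simp add: nn sum_nonneg)
  have wle: "w x \<le> S" for x unfolding S_def
    by (rule member_le_sum) (auto simp: nn)
  have rhs0: "0 \<le> (\<Sum>x\<in>UNIV. \<Sum>x'\<in>UNIV - {x}. sqrt (w x * w x'))"
    by (intro sum_nonneg) (simp add: nn)
  show ?thesis
  proof (cases "S = 0")
    case True
    then show ?thesis using rhs0 by (simp add: S_def[symmetric])
  next
    case False
    hence Sp: "S > 0" using S0 by simp
    have split: "(\<Sum>x'\<in>UNIV. f x') = f x + (\<Sum>x'\<in>UNIV - {x}. f x')" for f :: "'a \<Rightarrow> real" and x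
      by (metis UNIV_I finite sum.remove)
    have "S * S = (\<Sum>x\<in>UNIV. \<Sum>x'\<in>UNIV. w x * w x')"
      unfolding S_def by (simp add: sum_product)
    also have "\<dots> = (\<Sum>x\<in>UNIV. (w x)^2 + (\<Sum>x'\<in>UNIV - {x}. w x * w x'))"
      by (rule sum.cong[OF refl], subst split) (simp add: power2_eq_square)
    also have "\<dots> = (\<Sum>x\<in>UNIV. (w x)^2) + (\<Sum>x\<in>UNIV. \<Sum>x'\<in>UNIV - {x}. w x * w x')"
      by (simp add: sum.distrib)
    finally have SS: "S * S = (\<Sum>x\<in>UNIV. (w x)^2) + (\<Sum>x\<in>UNIV. \<Sum>x'\<in>UNIV - {x}. w x * w x')" .
    have "S - (\<Sum>a\<in>UNIV. (w a)^2 / S) = (S * S - (\<Sum>a\<in>UNIV. (w a)^2)) / S"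
      using Sp by (simp add: sum_divide_distrib[symmetric] field_simps)
    also have "\<dots> = (\<Sum>x\<in>UNIV. \<Sum>x'\<in>UNIV - {x}. w x * w x' / S)"
      using SS by (simp add: sum_divide_distrib)
    also have "\<dots> \<le> (\<Sum>x\<in>UNIV. \<Sum>x'\<in>UNIV - {x}. sqrt (w x * w x'))"
    proof (intro sum_mono)
      fix x x'
      have p0: "0 \<le> w x * w x'" using nn by simp
      have "w x * w x' \<le> S * S" using wle nn S0 by (metis mult_mono)
      hence "sqrt (w x * w x') \<le> S" using Sp
        by (metis abs_of_nonneg less_imp_le real_sqrt_abs real_sqrt_le_mono power2_eq_square)
      hence "sqrt (w x * w x') * sqrt (w x * w x') \<le> S * sqrt (w x * w x')"
        by (metis mult_right_mono real_sqrt_ge_zero p0)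
      hence "w x * w x' \<le> S * sqrt (w x * w x')"
        using p0 by (simp add: real_sqrt_mult_self)
      thus "w x * w x' / S \<le> sqrt (w x * w x')"
        using Sp by (simp add: divide_le_eq mult.commute)
    qed
    finally show ?thesis by (simp add: S_def)
  qed
qed

theorem proposition4:
  fixes W :: "'a::{field,finite} \<Rightarrow> 'b::finite \<Rightarrow> real"
  assumes "dmc W" and "weakly_symmetric W"
  shows "C_KV W \<ge> 1 - (real (card (UNIV :: 'a set)) - 1) * bhattacharyya W"
proof -
  define q where "q = real (card (UNIV :: 'a set))"
  define S where "S y = (\<Sum>x\<in>UNIV. W x y)" for y
  have nn: "\<And>x y. 0 \<le> W x y" and rs: "\<And>x. (\<Sum>y\<in>UNIV. W x y) = 1"
    using assms(1) unfolding dmc_def by auto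
  have "{0::'a, 1} \<subseteq> UNIV" by simp
  hence "card {0::'a, 1} \<le> card (UNIV :: 'a set)" by (rule card_mono[OF finite_UNIV])
  hence q2: "q \<ge> 2" unfolding q_def by simp
  have C: "C_KV W = (1/q) * (\<Sum>y\<in>UNIV. \<Sum>a\<in>UNIV. (W a y)^2 / S y)"
    unfolding C_KV_def out_prob_def app_def q_def S_def[symmetric]
    by (simp add: sum_distrib_left sum_divide_distrib power_divide power2_eq_square)
       (intro sum.cong refl, simp)
  have one: "1 = (1/q) * (\<Sum>y\<in>UNIV. S y)"
  proof -
    have "(\<Sum>y\<in>UNIV. S y) = (\<Sum>x\<in>UNIV. \<Sum>y\<in>UNIV. W x y)"
      unfolding S_def by (rule sum.swap)
    also have "\<dots> = q" by (simp add: rs q_def)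
    finally show ?thesis using q2 by simp
  qed
  have Z: "(q - 1) * bhattacharyya W
     = (1/q) * (\<Sum>y\<in>UNIV. \<Sum>x\<in>UNIV. \<Sum>x'\<in>UNIV - {x}. sqrt (W x y * W x' y))"
  proof -
    have "(\<Sum>x\<in>UNIV. \<Sum>x'\<in>UNIV - {x}. \<Sum>y\<in>UNIV. sqrt (W x y * W x' y))
        = (\<Sum>x\<in>UNIV. \<Sum>y\<in>UNIV. \<Sum>x'\<in>UNIV - {x}. sqrt (W x y * W x' y))"
      by (rule sum.cong[OF refl], rule sum.swap)
    also have "\<dots> = (\<Sum>y\<in>UNIV. \<Sum>x\<in>UNIV. \<Sum>x'\<in>UNIV - {x}. sqrt (W x y * W x' y))"
      by (rule sum.swap)
    finally have e: "(\<Sum>x\<in>UNIV. \<Sum>x'\<in>UNIV - {x}. \<Sum>y\<in>UNIV. sqrt (W x y * W x' y))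
        = (\<Sum>y\<in>UNIV. \<Sum>x\<in>UNIV. \<Sum>x'\<in>UNIV - {x}. sqrt (W x y * W x' y))" .
    show ?thesis unfolding bhattacharyya_def q_def[symmetric] e using q2 by simp
  qed
  have "(\<Sum>y\<in>UNIV. S y) - (\<Sum>y\<in>UNIV. \<Sum>a\<in>UNIV. (W a y)^2 / S y)
      \<le> (\<Sum>y\<in>UNIV. \<Sum>x\<in>UNIV. \<Sum>x'\<in>UNIV - {x}. sqrt (W x y * W x' y))"
    unfolding sum_subtractf[symmetric]
    by (rule sum_mono) (unfold S_def, rule key_y, simp add: nn)
  hence "(1/q) * ((\<Sum>y\<in>UNIV. S y) - (\<Sum>y\<in>UNIV. \<Sum>a\<in>UNIV. (W a y)^2 / S y))
      \<le> (1/q) * (\<Sum>y\<in>UNIV. \<Sum>x\<in>UNIV. \<Sum>x'\<in>UNIV - {x}. sqrt (W x y * W x' y))"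
    using q2 by (intro mult_left_mono) auto
  thus ?thesis unfolding C Z q_def[symmetric] using one by (simp add: right_diff_distrib)
qed

end
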